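(* For every $\varphi\in\mathcal{L}_{CoRGAL}$ and every maximal consistent theory $x$: $\varphi\in x$ if and only if $(M^C,x)\models\varphi$.
   Context: Fix a finite set $A$ of agents and a countable set $P$ of propositional variables. The language $\mathcal{L}_{CoRGAL}$ is given by $\varphi ::= p \mid \neg\varphi \mid (\varphi\wedge\varphi) \mid K_a\varphi \mid [\varphi]\varphi \mid [G,\varphi]\varphi \mid [\langle G\rangle]\varphi$ with $p\in P$, $a\in A$, $G\subseteq A$. $\mathcal{L}_{EL}$ is the fragment built only from $p,\neg,\wedge,K_a$. Duals: $\langle\psi\rangle\varphi:=\neg[\psi]\neg\varphi$, $\langle G,\psi\rangle\varphi:=\neg[G,\psi]\neg\varphi$. $\mathcal{L}^G_{EL}$ is the set of formulas $\bigwedge_{i\in G}K_i\varphi_i$ with $\varphi_i\in\mathcal{L}_{EL}$; $\psi_G,\chi_G$ range over it. Semantics over epistemic models $M=(W,\sim,V)$ ($W\ne\emptyset$, $\sim_a$ equivalence relations, $V:P\to\mathcal{P}(W)$; $M^\varphi$ the restriction to $\{v:(M,v)\models\varphi\}$): standard for $p,\neg,\wedge,K_a$; $[\varphi]\psi$ holds at $w$ iff $(M,w)\models\varphi$ implies $(M^\varphi,w)\models\psi$; $[G,\chi]\varphi$ holds iff $\chi$ holds and $[\psi_G\wedge\chi]\varphi$ holds for all $\psi_G$; $[\langle G\rangle]\varphi$ holds iff for every $\psi_G$ there is $\chi_{A\setminus G}$ with $\psi_G\to\langle\psi_G\wedge\chi_{A\setminus G}\rangle\varphi$ holding. Necessity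 forms: $\eta ::= \sharp \mid \varphi\to\eta(\sharp)\mid K_a\eta(\sharp)\mid[\varphi]\eta(\sharp)$, $\eta(\varphi)$ replaces the unique $\sharp$ by $\varphi$. $\mathbf{CoRGAL}$ is the smallest set containing all instances of (A0) propositional tautologies; (A1) $K_a(\varphi\to\psi)\to(K_a\varphi\to K_a\psi)$; (A2) $K_a\varphi\to\varphi$; (A3) $K_a\varphi\to K_aK_a\varphi$; (A4) $\neg K_a\varphi\to K_a\neg K_a\varphi$; (A5) $[\varphi]p\leftrightarrow(\varphi\to p)$; (A6) $[\varphi]\neg\psi\leftrightarrow(\varphi\to\neg[\varphi]\psi)$; (A7) $[\varphi](\psi\wedge\chi)\leftrightarrow([\varphi]\psi\wedge[\varphi]\chi)$; (A8) $[\varphi]K_a\psi\leftrightarrow(\varphi\to K_a[\varphi]\psi)$; (A9) $[\varphi][\psi]\chi\leftrightarrow[\varphi\wedge[\varphi]\psi]\chi$; (A10) $[G,\chi]\varphi\to\chi\wedge[\psi_G\wedge\chi]\varphi$; (A11) $[\langle G\rangle]\varphi\to\langle A\setminus G,\psi_G\rangle\varphi$; closed under (R0) modus ponens; (R1) $\varphi/K_a\varphi$; (R2) $\varphi/[\psi]\varphi$; (R3) $\varphi/[G,\chi]\varphi$; (R4) $\varphi/[\langle G\rangle]\varphi$; (R5) from $\eta(\chi\wedge[\psi_G\wedge\chi]\varphi)$ for all $\psi_G$ infer $\eta([G,\chi]\varphi)$; (R6) from $\eta(\langle A\setminus G,\psi_G\rangle\varphi)$ for all $\psi_G$ infer $\eta([\langle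 G\rangle]\varphi)$. A theory is a set of formulas containing $\mathbf{CoRGAL}$ and closed under (R0), (R5), (R6); it is consistent iff $\bot\notin x$ and maximal iff for each $\varphi$, $\varphi\in x$ or $\neg\varphi\in x$. The canonical model $M^C=(W^C,\sim^C,V^C)$ has $W^C$ the set of maximal consistent theories, $x\sim^C_a y$ iff $\{\varphi:K_a\varphi\in x\}=\{\varphi:K_a\varphi\in y\}$, and $x\in V^C(p)$ iff $p\in x$. *)

theory Defs
  imports Main "HOL-Library.Countable"
begin

text \<open>Agents: a finite type 'a (A = UNIV); propositional variables: a countable type 'p.\<close>

datatype ('a, 'p) fm =
    Atom 'p
  | Neg "('a, 'p) fm"
  | Conj "('a, 'p) fm" "('a, 'p) fm"
  | K 'a "('a, 'p) fm"
  | Ann "('a, 'p) fm" "('a, 'p) fm"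
  | GAnn "'a set" "('a, 'p) fm" "('a, 'p) fm"
  | Coal "'a set" "('a, 'p) fm"

definition fimp :: "('a,'p) fm \<Rightarrow> ('a,'p) fm \<Rightarrow> ('a,'p) fm" where
  "fimp \<phi> \<psi> = Neg (Conj \<phi> (Neg \<psi>))"

definition fiff :: "('a,'p) fm \<Rightarrow> ('a,'p) fm \<Rightarrow> ('a,'p) fm" where
  "fiff \<phi> \<psi> = Conj (fimp \<phi> \<psi>) (fimp \<psi> \<phi>)"

definition fbot :: "('a,'p) fm" where
  "fbot = Conj (Atom undefined) (Neg (Atom undefined))"

definition ftop :: "('a,'p) fm" where
  "ftop = Neg fbot"

definition dAnn :: "('a,'p) fm \<Rightarrow> ('a,'p) fm \<Rightarrow> ('a,'p) fm" where
  "dAnn \<psi> \<phi> = Neg (Ann \<psi> (Neg \<phi>))"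

definition dGAnn :: "'a set \<Rightarrow> ('a,'p) fm \<Rightarrow> ('a,'p) fm \<Rightarrow> ('a,'p) fm" where
  "dGAnn G \<psi> \<phi> = Neg (GAnn G \<psi> (Neg \<phi>))"

primrec is_el :: "('a,'p) fm \<Rightarrow> bool" where
  "is_el (Atom p) = True"
| "is_el (Neg \<phi>) = is_el \<phi>"
| "is_el (Conj \<phi> \<psi>) = (is_el \<phi> \<and> is_el \<psi>)"
| "is_el (K a \<phi>) = is_el \<phi>"
| "is_el (Ann \<phi> \<psi>) = False"
| "is_el (GAnn G \<phi> \<psi>) = False"
| "is_el (Coal G \<phi>) = False"

fun conjs :: "('a,'p) fm list \<Rightarrow> ('a,'p) fm" where
  "conjs [] = ftop"
| "conjs [\<phi>] = \<phi>"
| "conjs (\<phi> # \<psi>s) = Conj \<phi> (conjs \<psi>s)"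

text \<open>L^G_EL: formulas \<And>_{i\<in>G} K_i \<phi>_i with \<phi>_i epistemic (any enumeration order of G;
  the empty conjunction is \<top>).\<close>
definition LG :: "'a set \<Rightarrow> ('a,'p) fm set" where
  "LG G = {conjs (map (\<lambda>i. K i (f i)) xs) | xs f. distinct xs \<and> set xs = G \<and> (\<forall>i. is_el (f i))}"

record ('a, 'p, 'w) model =
  W :: "'w set"
  Rel :: "'a \<Rightarrow> ('w \<times> 'w) set"
  Val :: "'p \<Rightarrow> 'w set"

definition epistemic_model :: "('a,'p,'w) model \<Rightarrow> bool" where
  "epistemic_model M \<longleftrightarrow> W M \<noteq> {} \<and> (\<forall>a. equiv (W M) (Rel M a)) \<and> (\<forall>p. Val M p \<subseteq> W M)"

definition restr :: "('a,'p,'w) model \<Rightarrow> 'w set \<Rightarrow> ('a,'p,'w) model" where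
  "restr M S = \<lparr>W = W M \<inter> S, Rel = (\<lambda>a. Rel M a \<inter> (S \<times> S)), Val = (\<lambda>p. Val M p \<inter> S)\<rparr>"

primrec sat_el :: "('a,'p) fm \<Rightarrow> ('a,'p,'w) model \<Rightarrow> 'w \<Rightarrow> bool" where
  "sat_el (Atom p) M w = (w \<in> Val M p)"
| "sat_el (Neg \<phi>) M w = (\<not> sat_el \<phi> M w)"
| "sat_el (Conj \<phi> \<psi>) M w = (sat_el \<phi> M w \<and> sat_el \<psi> M w)"
| "sat_el (K a \<phi>) M w = (\<forall>v\<in>W M. (w, v) \<in> Rel M a \<longrightarrow> sat_el \<phi> M v)"
| "sat_el (Ann \<phi> \<psi>) M w = False"
| "sat_el (GAnn G \<phi> \<psi>) M w = False"
| "sat_el (Coal G \<phi>) M w = False"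

primrec sat :: "('a,'p) fm \<Rightarrow> ('a,'p,'w) model \<Rightarrow> 'w \<Rightarrow> bool" where
  "sat (Atom p) M w = (w \<in> Val M p)"
| "sat (Neg \<phi>) M w = (\<not> sat \<phi> M w)"
| "sat (Conj \<phi> \<psi>) M w = (sat \<phi> M w \<and> sat \<psi> M w)"
| "sat (K a \<phi>) M w = (\<forall>v\<in>W M. (w, v) \<in> Rel M a \<longrightarrow> sat \<phi> M v)"
| "sat (Ann \<phi> \<psi>) M w = (sat \<phi> M w \<longrightarrow> sat \<psi> (restr M {v \<in> W M. sat \<phi> M v}) w)"
| "sat (GAnn G \<chi> \<phi>) M w =
     (sat \<chi> M w \<and>
      (\<forall>\<psi>\<in>LG G. (sat_el \<psi> M w \<and> sat \<chi> M w) \<longrightarrow>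
          sat \<phi> (restr M {v \<in> W M. sat_el \<psi> M v \<and> sat \<chi> M v}) w))"
| "sat (Coal G \<phi>) M w =
     (\<forall>\<psi>\<in>LG G. \<exists>\<chi>\<in>LG (- G). sat_el \<psi> M w \<longrightarrow>
        (sat_el \<psi> M w \<and> sat_el \<chi> M w \<and>
         sat \<phi> (restr M {v \<in> W M. sat_el \<psi> M v \<and> sat_el \<chi> M v}) w))"

text \<open>Sanity lemmas: the clauses above are the literal unfoldings of the paper's clauses.\<close>
lemma sat_el_sat: "is_el \<psi> \<Longrightarrow> sat_el \<psi> M w = sat \<psi> M w"
  by (induction \<psi> arbitrary: w) auto

lemma is_el_conjs: "\<forall>\<phi>\<in>set xs. is_el \<phi> \<Longrightarrow> is_el (conjs xs)"
  by (induction xs rule: conjs.induct) (auto simp: ftop_def fbot_def)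

lemma is_el_LG: "\<psi> \<in> LG G \<Longrightarrow> is_el \<psi>"
  unfolding LG_def by (auto intro!: is_el_conjs)

lemma sat_GAnn_unfold:
  "sat (GAnn G \<chi> \<phi>) M w \<longleftrightarrow> sat \<chi> M w \<and> (\<forall>\<psi>\<in>LG G. sat (Ann (Conj \<psi> \<chi>) \<phi>) M w)"
  by (simp add: sat_el_sat is_el_LG)

lemma sat_Coal_unfold:
  "sat (Coal G \<phi>) M w \<longleftrightarrow>
   (\<forall>\<psi>\<in>LG G. \<exists>\<chi>\<in>LG (- G). sat (fimp \<psi> (dAnn (Conj \<psi> \<chi>) \<phi>)) M w)"
  by (simp add: sat_el_sat is_el_LG fimp_def dAnn_def)

primrec tv :: "(('a,'p) fm \<Rightarrow> bool) \<Rightarrow> ('a,'p) fm \<Rightarrow> bool" where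
  "tv f (Atom p) = f (Atom p)"
| "tv f (Neg \<phi>) = (\<not> tv f \<phi>)"
| "tv f (Conj \<phi> \<psi>) = (tv f \<phi> \<and> tv f \<psi>)"
| "tv f (K a \<phi>) = f (K a \<phi>)"
| "tv f (Ann \<phi> \<psi>) = f (Ann \<phi> \<psi>)"
| "tv f (GAnn G \<phi> \<psi>) = f (GAnn G \<phi> \<psi>)"
| "tv f (Coal G \<phi>) = f (Coal G \<phi>)"

definition taut :: "('a,'p) fm \<Rightarrow> bool" where
  "taut \<phi> \<longleftrightarrow> (\<forall>f. tv f \<phi>)"

datatype ('a, 'p) nform =
    Hole
  | NImp "('a,'p) fm" "('a,'p) nform"
  | NK 'a "('a,'p) nform"
  | NAnn "('a,'p) fm" "('a,'p) nform"

primrec fill :: "('a,'p) nform \<Rightarrow> ('a,'p) fm \<Rightarrow> ('a,'p) fm" where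
  "fill Hole \<phi> = \<phi>"
| "fill (NImp \<psi> \<eta>) \<phi> = fimp \<psi> (fill \<eta> \<phi>)"
| "fill (NK a \<eta>) \<phi> = K a (fill \<eta> \<phi>)"
| "fill (NAnn \<psi> \<eta>) \<phi> = Ann \<psi> (fill \<eta> \<phi>)"

inductive_set CoRGAL :: "('a,'p) fm set" where
  A0: "taut \<phi> \<Longrightarrow> \<phi> \<in> CoRGAL"
| A1: "fimp (K a (fimp \<phi> \<psi>)) (fimp (K a \<phi>) (K a \<psi>)) \<in> CoRGAL"
| A2: "fimp (K a \<phi>) \<phi> \<in> CoRGAL"
| A3: "fimp (K a \<phi>) (K a (K a \<phi>)) \<in> CoRGAL"
| A4: "fimp (Neg (K a \<phi>)) (K a (Neg (K a \<phi>))) \<in> CoRGAL"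
| A5: "fiff (Ann \<phi> (Atom p)) (fimp \<phi> (Atom p)) \<in> CoRGAL"
| A6: "fiff (Ann \<phi> (Neg \<psi>)) (fimp \<phi> (Neg (Ann \<phi> \<psi>))) \<in> CoRGAL"
| A7: "fiff (Ann \<phi> (Conj \<psi> \<chi>)) (Conj (Ann \<phi> \<psi>) (Ann \<phi> \<chi>)) \<in> CoRGAL"
| A8: "fiff (Ann \<phi> (K a \<psi>)) (fimp \<phi> (K a (Ann \<phi> \<psi>))) \<in> CoRGAL"
| A9: "fiff (Ann \<phi> (Ann \<psi> \<chi>)) (Ann (Conj \<phi> (Ann \<phi> \<psi>)) \<chi>) \<in> CoRGAL"
| A10: "\<psi> \<in> LG G \<Longrightarrow> fimp (GAnn G \<chi> \<phi>) (Conj \<chi> (Ann (Conj \<psi> \<chi>) \<phi>)) \<in> CoRGAL"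
| A11: "\<psi> \<in> LG G \<Longrightarrow> fimp (Coal G \<phi>) (dGAnn (- G) \<psi> \<phi>) \<in> CoRGAL"
| R0: "\<phi> \<in> CoRGAL \<Longrightarrow> fimp \<phi> \<psi> \<in> CoRGAL \<Longrightarrow> \<psi> \<in> CoRGAL"
| R1: "\<phi> \<in> CoRGAL \<Longrightarrow> K a \<phi> \<in> CoRGAL"
| R2: "\<phi> \<in> CoRGAL \<Longrightarrow> Ann \<psi> \<phi> \<in> CoRGAL"
| R3: "\<phi> \<in> CoRGAL \<Longrightarrow> GAnn G \<chi> \<phi> \<in> CoRGAL"
| R4: "\<phi> \<in> CoRGAL \<Longrightarrow> Coal G \<phi> \<in> CoRGAL"
| R5: "(\<And>\<psi>. \<psi> \<in> LG G \<Longrightarrow> fill \<eta> (Conj \<chi> (Ann (Conj \<psi> \<chi>) \<phi>)) \<in> CoRGAL)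
        \<Longrightarrow> fill \<eta> (GAnn G \<chi> \<phi>) \<in> CoRGAL"
| R6: "(\<And>\<psi>. \<psi> \<in> LG G \<Longrightarrow> fill \<eta> (dGAnn (- G) \<psi> \<phi>) \<in> CoRGAL)
        \<Longrightarrow> fill \<eta> (Coal G \<phi>) \<in> CoRGAL"

definition is_theory :: "('a,'p) fm set \<Rightarrow> bool" where
  "is_theory x \<longleftrightarrow>
     CoRGAL \<subseteq> x \<and>
     (\<forall>\<phi> \<psi>. \<phi> \<in> x \<longrightarrow> fimp \<phi> \<psi> \<in> x \<longrightarrow> \<psi> \<in> x) \<and>
     (\<forall>\<eta> G \<chi> \<phi>. (\<forall>\<psi>\<in>LG G. fill \<eta> (Conj \<chi> (Ann (Conj \<psi> \<chi>) \<phi>)) \<in> x)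
                  \<longrightarrow> fill \<eta> (GAnn G \<chi> \<phi>) \<in> x) \<and>
     (\<forall>\<eta> G \<phi>. (\<forall>\<psi>\<in>LG G. fill \<eta> (dGAnn (- G) \<psi> \<phi>) \<in> x)
                  \<longrightarrow> fill \<eta> (Coal G \<phi>) \<in> x)"

definition consistent :: "('a,'p) fm set \<Rightarrow> bool" where
  "consistent x \<longleftrightarrow> fbot \<notin> x"

definition maximal :: "('a,'p) fm set \<Rightarrow> bool" where
  "maximal x \<longleftrightarrow> (\<forall>\<phi>. \<phi> \<in> x \<or> Neg \<phi> \<in> x)"

definition WC :: "('a,'p) fm set set" where
  "WC = {x. is_theory x \<and> consistent x \<and> maximal x}"

definition MC :: "('a, 'p, ('a,'p) fm set) model" where
  "MC = \<lparr>W = WC,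
         Rel = (\<lambda>a. {(x, y). x \<in> WC \<and> y \<in> WC \<and> {\<phi>. K a \<phi> \<in> x} = {\<phi>. K a \<phi> \<in> y}}),
         Val = (\<lambda>p. {x \<in> WC. Atom p \<in> x})\<rparr>"

end

theory Submission
  imports Defs
begin



datatype tr = Lf nat | Nd nat "tr list"
instance tr :: countable by countable_datatype

primrec enc :: "('a::finite,'p::countable) fm \<Rightarrow> tr" where
  "enc (Atom p) = Nd 0 [Lf (to_nat p)]"
| "enc (Neg a) = Nd 1 [enc a]"
| "enc (Conj a b) = Nd 2 [enc a, enc b]"
| "enc (K i a) = Nd 3 [Lf (to_nat i), enc a]"
| "enc (Ann a b) = Nd 4 [enc a, enc b]"
| "enc (GAnn G a b) = Nd 5 [Lf (to_nat G), enc a, enc b]"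
| "enc (Coal G a) = Nd 6 [Lf (to_nat G), enc a]"

lemma inj_enc: "inj enc"
proof -
  have "enc a = enc b \<Longrightarrow> a = b" for a b :: "('a::finite,'p::countable) fm"
    by (induction a arbitrary: b; case_tac b; simp)
  then show ?thesis by (auto simp: inj_def)
qed

lemma enum_ex: "\<exists>e :: nat \<Rightarrow> ('a::finite,'p::countable) fm. surj e"
proof
  show "surj (\<lambda>n. inv enc (from_nat n) :: ('a,'p) fm)"
  proof (rule surjI)
    fix y :: "('a,'p) fm"
    show "inv enc (from_nat (to_nat (enc y))) = y" by (simp add: inv_f_f[OF inj_enc])
  qed
qed


section \<open>Theories\<close>

lemma th_CoRGAL: "is_theory x \<Longrightarrow> \<phi> \<in> CoRGAL \<Longrightarrow> \<phi> \<in> x"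
  unfolding is_theory_def by blast

lemma th_mp: "is_theory x \<Longrightarrow> \<phi> \<in> x \<Longrightarrow> fimp \<phi> \<psi> \<in> x \<Longrightarrow> \<psi> \<in> x"
  unfolding is_theory_def by blast

lemma th_R5: "is_theory x \<Longrightarrow> (\<And>\<psi>. \<psi> \<in> LG G \<Longrightarrow> fill \<eta> (Conj \<chi> (Ann (Conj \<psi> \<chi>) \<phi>)) \<in> x) \<Longrightarrow> fill \<eta> (GAnn G \<chi> \<phi>) \<in> x"
  unfolding is_theory_def by blast

lemma th_R6: "is_theory x \<Longrightarrow> (\<And>\<psi>. \<psi> \<in> LG G \<Longrightarrow> fill \<eta> (dGAnn (- G) \<psi> \<phi>) \<in> x) \<Longrightarrow> fill \<eta> (Coal G \<phi>) \<in> x"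
  unfolding is_theory_def by blast

lemma th_taut_mp: "is_theory x \<Longrightarrow> \<phi> \<in> x \<Longrightarrow> taut (fimp \<phi> \<psi>) \<Longrightarrow> \<psi> \<in> x"
  by (rule th_mp, assumption+, rule th_CoRGAL, assumption, rule CoRGAL.A0)

lemma th_taut_mp2:
  assumes t: "is_theory x" and a: "\<phi> \<in> x" and b: "\<psi> \<in> x" and c: "taut (fimp \<phi> (fimp \<psi> \<chi>))"
  shows "\<chi> \<in> x"
proof -
  have "fimp \<phi> (fimp \<psi> \<chi>) \<in> x" by (rule th_CoRGAL[OF t CoRGAL.A0[OF c]])
  then have "fimp \<psi> \<chi> \<in> x" by (rule th_mp[OF t a])
  then show ?thesis by (rule th_mp[OF t b])
qed

lemma taut_contra: "taut (fimp \<phi> (fimp (Neg \<phi>) fbot))" by (simp add: taut_def fimp_def fbot_def)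

lemma th_contra: "is_theory x \<Longrightarrow> consistent x \<Longrightarrow> \<phi> \<in> x \<Longrightarrow> Neg \<phi> \<in> x \<Longrightarrow> False"
  using th_taut_mp2[OF _ _ _ taut_contra] unfolding consistent_def by blast

lemma WC_th: "x \<in> WC \<Longrightarrow> is_theory x" by (simp add: WC_def)

lemma wc_neg: "x \<in> WC \<Longrightarrow> Neg \<phi> \<in> x \<longleftrightarrow> \<phi> \<notin> x"
  using th_contra[of x \<phi>] by (auto simp: WC_def maximal_def)

lemma taut_c1: "taut (fimp (Conj \<phi> \<psi>) \<phi>)" by (simp add: taut_def fimp_def)
lemma taut_c2: "taut (fimp (Conj \<phi> \<psi>) \<psi>)" by (simp add: taut_def fimp_def)
lemma taut_c3: "taut (fimp \<phi> (fimp \<psi> (Conj \<phi> \<psi>)))" by (simp add: taut_def fimp_def)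

lemma wc_conj: "x \<in> WC \<Longrightarrow> Conj \<phi> \<psi> \<in> x \<longleftrightarrow> \<phi> \<in> x \<and> \<psi> \<in> x"
  using th_taut_mp[OF WC_th, of x "Conj \<phi> \<psi>" \<phi>, OF _ _ taut_c1] th_taut_mp[OF WC_th, of x "Conj \<phi> \<psi>" \<psi>, OF _ _ taut_c2]
      th_taut_mp2[OF WC_th, of x \<phi> \<psi> "Conj \<phi> \<psi>", OF _ _ _ taut_c3]
  by blast

lemma wc_imp: "x \<in> WC \<Longrightarrow> fimp \<phi> \<psi> \<in> x \<longleftrightarrow> (\<phi> \<in> x \<longrightarrow> \<psi> \<in> x)"
  by (simp add: fimp_def wc_neg wc_conj)

lemma wc_thm: "x \<in> WC \<Longrightarrow> \<phi> \<in> CoRGAL \<Longrightarrow> \<phi> \<in> x"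
  using th_CoRGAL[OF WC_th] by blast

lemma wc_iff: "x \<in> WC \<Longrightarrow> fiff \<phi> \<psi> \<in> CoRGAL \<Longrightarrow> (\<phi> \<in> x \<longleftrightarrow> \<psi> \<in> x)"
proof -
  assume x: "x \<in> WC" and h: "fiff \<phi> \<psi> \<in> CoRGAL"
  have "fiff \<phi> \<psi> \<in> x" by (rule wc_thm[OF x h])
  then show ?thesis by (simp add: fiff_def wc_conj[OF x] wc_imp[OF x]) blast
qed


section \<open>Measure\<close>

primrec dq :: "('a,'p) fm \<Rightarrow> nat" where
  "dq (Atom p) = 0"
| "dq (Neg a) = dq a"
| "dq (Conj a b) = max (dq a) (dq b)"
| "dq (K i a) = dq a"
| "dq (Ann a b) = dq a + dq b"
| "dq (GAnn G a b) = Suc (dq a + dq b)"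
| "dq (Coal G a) = dq a + 2"

primrec cx :: "('a,'p) fm \<Rightarrow> nat" where
  "cx (Atom p) = 1"
| "cx (Neg a) = Suc (cx a)"
| "cx (Conj a b) = Suc (cx a + cx b)"
| "cx (K i a) = Suc (cx a)"
| "cx (Ann a b) = (5 + cx a) * cx b"
| "cx (GAnn G a b) = 1"
| "cx (Coal G a) = 1"

lemma cx_pos: "0 < cx \<phi>" by (induction \<phi>) auto

lemma dq_el: "is_el \<psi> \<Longrightarrow> dq \<psi> = 0" by (induction \<psi>) auto

section \<open>Semantics\<close>

lemma restr_simps[simp]: "W (restr M S) = W M \<inter> S" "Rel (restr M S) a = Rel M a \<inter> (S \<times> S)"
  "Val (restr M S) p = Val M p \<inter> S"
  by (simp_all add: restr_def)

lemma restr_restr: "restr (restr M S) T = restr M (S \<inter> T)"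
  by (simp add: restr_def Int_ac Times_Int_Times)

lemma LG_ne: "LG (G::'a::finite set) \<noteq> {}"
proof -
  have fin: "finite G" by simp
  obtain xs where d: "distinct xs" and sx: "set xs = G" using finite_distinct_list[OF fin] by blast
  have el: "\<forall>i. is_el ((\<lambda>i. ftop) i :: ('a,'b) fm)" by (simp add: ftop_def fbot_def)
  have "conjs (map (\<lambda>i. K i ((\<lambda>i. ftop) i)) xs) \<in> LG G"
    unfolding LG_def mem_Collect_eq
    by (rule exI[of _ xs], rule exI[of _ "\<lambda>i. ftop"]) (simp add: d sx ftop_def fbot_def)
  then show ?thesis by blast
qed

lemma sem_A5: "w \<in> W M \<Longrightarrow> sat (Ann \<alpha> (Atom p)) M w \<longleftrightarrow> sat (fimp \<alpha> (Atom p)) M w"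
  by (auto simp: fimp_def)

lemma sem_A6: "sat (Ann \<alpha> (Neg \<beta>)) M w \<longleftrightarrow> sat (fimp \<alpha> (Neg (Ann \<alpha> \<beta>))) M w"
  by (auto simp: fimp_def)

lemma sem_A7: "sat (Ann \<alpha> (Conj \<beta> \<gamma>)) M w \<longleftrightarrow> sat (Conj (Ann \<alpha> \<beta>) (Ann \<alpha> \<gamma>)) M w"
  by auto

lemma sem_A8: "w \<in> W M \<Longrightarrow> sat (Ann \<alpha> (K a \<beta>)) M w \<longleftrightarrow> sat (fimp \<alpha> (K a (Ann \<alpha> \<beta>))) M w"
  by (auto simp: fimp_def)

lemma g1: "(A \<longrightarrow> B \<longrightarrow> C) = ((A \<and> (A \<longrightarrow> B)) \<longrightarrow> C)" by blast
lemma g3: "(A \<longrightarrow> (\<forall>x\<in>L. P x)) = (\<forall>x\<in>L. A \<longrightarrow> P x)" by blast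

lemma sem_A9: "sat (Ann \<alpha> (Ann \<beta> \<gamma>)) M w \<longleftrightarrow> sat (Ann (Conj \<alpha> (Ann \<alpha> \<beta>)) \<gamma>) M w"
proof -
  let ?S = "{v \<in> W M. sat \<alpha> M v}"
  let ?M = "restr M ?S"
  have eq: "restr ?M {v \<in> W ?M. sat \<beta> ?M v} = restr M {v \<in> W M. sat (Conj \<alpha> (Ann \<alpha> \<beta>)) M v}"
    unfolding restr_restr by (rule arg_cong[where f="restr M"]) auto
  have "sat (Ann \<alpha> (Ann \<beta> \<gamma>)) M w = (sat \<alpha> M w \<longrightarrow> sat \<beta> ?M w \<longrightarrow> sat \<gamma> (restr ?M {v \<in> W ?M. sat \<beta> ?M v}) w)"
    by (simp only: sat.simps(5))
  also have "\<dots> = (sat (Conj \<alpha> (Ann \<alpha> \<beta>)) M w \<longrightarrow> sat \<gamma> (restr M {v \<in> W M. sat (Conj \<alpha> (Ann \<alpha> \<beta>)) M v}) w)"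
  proof -
    have c: "sat (Conj \<alpha> (Ann \<alpha> \<beta>)) M w = (sat \<alpha> M w \<and> (sat \<alpha> M w \<longrightarrow> sat \<beta> ?M w))"
      by (simp only: sat.simps(3) sat.simps(5))
    show ?thesis unfolding eq c by (rule g1)
  qed
  also have "\<dots> = sat (Ann (Conj \<alpha> (Ann \<alpha> \<beta>)) \<gamma>) M w"
    by (simp only: sat.simps(5))
  finally show ?thesis .
qed

lemma ann_conj: "sat (Ann \<alpha> (Conj \<chi> X)) M w = (sat \<alpha> M w \<longrightarrow> sat \<chi> (restr M {v \<in> W M. sat \<alpha> M v}) w \<and> sat X (restr M {v \<in> W M. sat \<alpha> M v}) w)"
  by (simp only: sat.simps(3) sat.simps(5))

lemma aux_ne: "L \<noteq> {} \<Longrightarrow> (A \<longrightarrow> B \<and> (\<forall>\<psi>\<in>L. P \<psi>)) = (\<forall>\<psi>\<in>L. A \<longrightarrow> B \<and> P \<psi>)" by auto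

lemma sem_AG: "sat (Ann \<alpha> (GAnn (G::'a::finite set) \<chi> \<phi>)) M w \<longleftrightarrow>
   (\<forall>\<psi>\<in>LG G. sat (Ann \<alpha> (Conj \<chi> (Ann (Conj \<psi> \<chi>) \<phi>))) M w)"
  unfolding ann_conj sat.simps(5)[of \<alpha> "GAnn G \<chi> \<phi>"] sat_GAnn_unfold by (rule aux_ne[OF LG_ne])

lemma ann_comm: "sat (Ann (Conj a b) X) M w = sat (Ann (Conj b a) X) M w"
proof -
  have e: "{v \<in> W M. sat (Conj a b) M v} = {v \<in> W M. sat (Conj b a) M v}" by auto
  show ?thesis unfolding sat.simps(5)[of "Conj a b"] sat.simps(5)[of "Conj b a"] e
    by (simp only: sat.simps(3) conj_commute)
qed

lemma aux_coal: "L \<noteq> {} \<Longrightarrow> (\<exists>\<chi>\<in>L. A \<longrightarrow> \<not> P \<chi>) = (\<not> (A \<and> (\<forall>\<chi>\<in>L. P \<chi>)))" by auto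

lemma sem_Coal: "sat (Coal (G::'a::finite set) \<phi>) M w \<longleftrightarrow> (\<forall>\<psi>\<in>LG G. sat (dGAnn (- G) \<psi> \<phi>) M w)"
proof -
  have pt: "(\<exists>\<chi>\<in>LG (-G). sat (fimp \<psi> (dAnn (Conj \<psi> \<chi>) \<phi>)) M w) = sat (dGAnn (-G) \<psi> \<phi>) M w" for \<psi>
  proof -
    have "(\<exists>\<chi>\<in>LG (-G). sat (fimp \<psi> (dAnn (Conj \<psi> \<chi>) \<phi>)) M w) =
       (\<exists>\<chi>\<in>LG(-G). sat \<psi> M w \<longrightarrow> \<not> sat (Ann (Conj \<chi> \<psi>) (Neg \<phi>)) M w)"
      unfolding fimp_def dAnn_def by (simp only: sat.simps(2) sat.simps(3) ann_comm[of \<psi> _ "Neg \<phi>"] not_not de_Morgan_conj imp_conv_disj)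
    also have "\<dots> = sat (dGAnn (-G) \<psi> \<phi>) M w"
      unfolding dGAnn_def sat.simps(2) sat_GAnn_unfold by (rule aux_coal[OF LG_ne])
    finally show ?thesis .
  qed
  show ?thesis unfolding sat_Coal_unfold pt ..
qed

lemma sem_AC: "sat (Ann \<alpha> (Coal (G::'a::finite set) \<phi>)) M w \<longleftrightarrow>
   (\<forall>\<psi>\<in>LG G. sat (Ann \<alpha> (dGAnn (- G) \<psi> \<phi>)) M w)"
proof -
  have "sat (Ann \<alpha> (Coal G \<phi>)) M w = (sat \<alpha> M w \<longrightarrow> (\<forall>\<psi>\<in>LG G. sat (dGAnn (- G) \<psi> \<phi>) (restr M {v \<in> W M. sat \<alpha> M v}) w))"
    by (simp only: sat.simps(5) sem_Coal)
  also have "\<dots> = (\<forall>\<psi>\<in>LG G. sat (Ann \<alpha> (dGAnn (- G) \<psi> \<phi>)) M w)"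
    by (simp only: sat.simps(5)[of \<alpha> "dGAnn _ _ _"]) (rule g3)
  finally show ?thesis .
qed



definition fext :: "('a,'p) fm set \<Rightarrow> ('a,'p) fm \<Rightarrow> ('a,'p) fm set" where
  "fext x \<phi> = {\<psi>. fimp \<phi> \<psi> \<in> x}"

lemma taut_k: "taut (fimp \<psi> (fimp \<phi> \<psi>))" by (simp add: taut_def fimp_def)
lemma taut_s: "taut (fimp (fimp \<phi> a) (fimp (fimp \<phi> (fimp a b)) (fimp \<phi> b)))" by (simp add: taut_def fimp_def)
lemma taut_id: "taut (fimp \<phi> \<phi>)" by (simp add: taut_def fimp_def)

lemma ext_sub: assumes t: "is_theory x" shows "x \<subseteq> fext x \<phi>"
proof
  fix \<psi> assume "\<psi> \<in> x"
  then have "fimp \<phi> \<psi> \<in> x" by (rule th_taut_mp[OF t _ taut_k])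
  then show "\<psi> \<in> fext x \<phi>" by (simp add: fext_def)
qed

lemma ext_mem: assumes t: "is_theory x" shows "\<phi> \<in> fext x \<phi>"
proof -
  have "fimp \<phi> \<phi> \<in> x" by (rule th_CoRGAL[OF t CoRGAL.A0[OF taut_id]])
  then show ?thesis by (simp add: fext_def)
qed

lemma ext_theory:
  fixes x :: "('a,'p) fm set"
  assumes t: "is_theory x"
  shows "is_theory (fext x \<phi>)"
  unfolding is_theory_def
proof (intro conjI allI impI subsetI)
  fix \<psi> :: "('a,'p) fm" assume "\<psi> \<in> CoRGAL"
  then have "\<psi> \<in> x" by (rule th_CoRGAL[OF t])
  then show "\<psi> \<in> fext x \<phi>" using ext_sub[OF t] by blast
next
  fix a b :: "('a,'p) fm" assume "a \<in> fext x \<phi>" "fimp a b \<in> fext x \<phi>"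
  then have "fimp \<phi> a \<in> x" "fimp \<phi> (fimp a b) \<in> x" by (simp_all add: fext_def)
  then have "fimp \<phi> b \<in> x" by (rule th_taut_mp2[OF t _ _ taut_s])
  then show "b \<in> fext x \<phi>" by (simp add: fext_def)
next
  fix \<eta> G \<chi> \<psi>
  assume "\<forall>\<psi>'\<in>LG G. fill \<eta> (Conj \<chi> (Ann (Conj \<psi>' \<chi>) \<psi>)) \<in> fext x \<phi>"
  then have "\<And>\<psi>'. \<psi>' \<in> LG G \<Longrightarrow> fill (NImp \<phi> \<eta>) (Conj \<chi> (Ann (Conj \<psi>' \<chi>) \<psi>)) \<in> x"
    by (simp add: fext_def)
  then have "fill (NImp \<phi> \<eta>) (GAnn G \<chi> \<psi>) \<in> x" by (rule th_R5[OF t])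
  then show "fill \<eta> (GAnn G \<chi> \<psi>) \<in> fext x \<phi>" by (simp add: fext_def)
next
  fix \<eta> G \<psi>
  assume "\<forall>\<psi>'\<in>LG G. fill \<eta> (dGAnn (- G) \<psi>' \<psi>) \<in> fext x \<phi>"
  then have "\<And>\<psi>'. \<psi>' \<in> LG G \<Longrightarrow> fill (NImp \<phi> \<eta>) (dGAnn (- G) \<psi>' \<psi>) \<in> x"
    by (simp add: fext_def)
  then have "fill (NImp \<phi> \<eta>) (Coal G \<psi>) \<in> x" by (rule th_R6[OF t])
  then show "fill \<eta> (Coal G \<psi>) \<in> fext x \<phi>" by (simp add: fext_def)
qed

lemma ext_cons: "consistent (fext x \<phi>) \<longleftrightarrow> fimp \<phi> fbot \<notin> x"
  by (simp add: consistent_def fext_def)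

lemma fill_G_inj: "fill \<eta> (GAnn G \<chi> \<phi>) = fill \<eta>' (GAnn G' \<chi>' \<phi>') \<Longrightarrow> \<eta> = \<eta>' \<and> G = G' \<and> \<chi> = \<chi>' \<and> \<phi> = \<phi>'"
  by (induction \<eta> arbitrary: \<eta>'; case_tac \<eta>'; simp add: fimp_def)

lemma fill_C_inj: "fill \<eta> (Coal G \<phi>) = fill \<eta>' (Coal G' \<phi>') \<Longrightarrow> \<eta> = \<eta>' \<and> G = G' \<and> \<phi> = \<phi>'"
  by (induction \<eta> arbitrary: \<eta>'; case_tac \<eta>'; simp add: fimp_def)

lemma fill_GC: "fill \<eta> (GAnn G \<chi> \<phi>) \<noteq> fill \<eta>' (Coal G' \<phi>')"
  by (induction \<eta> arbitrary: \<eta>'; case_tac \<eta>'; simp add: fimp_def)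

definition Good :: "('a,'p) fm set \<Rightarrow> ('a,'p) fm \<Rightarrow> ('a,'p) fm set \<Rightarrow> bool" where
  "Good x \<phi> y \<longleftrightarrow> is_theory y \<and> consistent y \<and> x \<subseteq> y \<and>
    (\<phi> \<in> y \<or>
     (Neg \<phi> \<in> y \<and> (\<forall>\<eta> G \<chi> \<psi>. \<phi> = fill \<eta> (GAnn G \<chi> \<psi>) \<longrightarrow>
          (\<exists>g\<in>LG G. Neg (fill \<eta> (Conj \<chi> (Ann (Conj g \<chi>) \<psi>))) \<in> y)) \<and>
      (\<forall>\<eta> G \<psi>. \<phi> = fill \<eta> (Coal G \<psi>) \<longrightarrow>
          (\<exists>g\<in>LG G. Neg (fill \<eta> (dGAnn (- G) g \<psi>)) \<in> y))))"

lemma taut_negbot: "taut (fimp (fimp (Neg \<phi>) fbot) \<phi>)" by (simp add: taut_def fimp_def fbot_def)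

lemma taut_fneg: "taut (fimp (fimp \<phi> fbot) (Neg \<phi>))" by (simp add: taut_def fimp_def fbot_def)

lemma good_ex:
  assumes t: "is_theory x" and c: "consistent x"
  shows "\<exists>y. Good x \<phi> y"
proof (cases "consistent (fext x \<phi>)")
  case True
  have "Good x \<phi> (fext x \<phi>)" unfolding Good_def
    by (intro conjI disjI1 ext_theory[OF t] True ext_sub[OF t] ext_mem[OF t])
  then show ?thesis by blast
next
  case False
  then have fb: "fimp \<phi> fbot \<in> x" by (simp add: ext_cons)
  have nx: "Neg \<phi> \<in> x" by (rule th_taut_mp[OF t fb taut_fneg])
  have incons: "\<phi> \<notin> x"
  proof
    assume "\<phi> \<in> x"
    then have "fbot \<in> x" by (rule th_mp[OF t _ fb])
    with c show False by (simp add: consistent_def)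
  qed
  show ?thesis
  proof (cases "\<exists>\<eta> G \<chi> \<psi>. \<phi> = fill \<eta> (GAnn G \<chi> \<psi>)")
    case True
    then obtain \<eta> G \<chi> \<psi> where phi: "\<phi> = fill \<eta> (GAnn G \<chi> \<psi>)" by blast
    have "\<exists>g\<in>LG G. consistent (fext x (Neg (fill \<eta> (Conj \<chi> (Ann (Conj g \<chi>) \<psi>)))))"
    proof (rule ccontr)
      assume neg: "\<not> ?thesis"
      have "fill \<eta> (Conj \<chi> (Ann (Conj g \<chi>) \<psi>)) \<in> x" if "g \<in> LG G" for g
      proof -
        have "fimp (Neg (fill \<eta> (Conj \<chi> (Ann (Conj g \<chi>) \<psi>)))) fbot \<in> x" using neg that by (simp add: ext_cons)
        then show ?thesis by (rule th_taut_mp[OF t _ taut_negbot])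
      qed
      then have "\<phi> \<in> x" unfolding phi by (rule th_R5[OF t])
      with incons show False by simp
    qed
    then obtain g where g: "g \<in> LG G" and cg: "consistent (fext x (Neg (fill \<eta> (Conj \<chi> (Ann (Conj g \<chi>) \<psi>)))))"
      by blast
    let ?y = "fext x (Neg (fill \<eta> (Conj \<chi> (Ann (Conj g \<chi>) \<psi>))))"
    have "Good x \<phi> ?y"
      unfolding Good_def
    proof (intro conjI disjI2 allI impI)
      show "is_theory ?y" by (rule ext_theory[OF t])
      show "consistent ?y" by (rule cg)
      show "x \<subseteq> ?y" by (rule ext_sub[OF t])
      show "Neg \<phi> \<in> ?y" using nx ext_sub[OF t] by blast
    next
      fix \<eta>' G' \<chi>' \<psi>' assume "\<phi> = fill \<eta>' (GAnn G' \<chi>' \<psi>')"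
      then have "fill \<eta> (GAnn G \<chi> \<psi>) = fill \<eta>' (GAnn G' \<chi>' \<psi>')" using phi by simp
      then have "\<eta>' = \<eta> \<and> G' = G \<and> \<chi>' = \<chi> \<and> \<psi>' = \<psi>" by (metis fill_G_inj)
      then show "\<exists>g\<in>LG G'. Neg (fill \<eta>' (Conj \<chi>' (Ann (Conj g \<chi>') \<psi>'))) \<in> ?y"
        using g ext_mem[OF t] by blast
    next
      fix \<eta>' G' \<psi>' assume "\<phi> = fill \<eta>' (Coal G' \<psi>')"
      then have False using phi fill_GC[of \<eta> G \<chi> \<psi> \<eta>' G' \<psi>'] by simp
      then show "\<exists>g\<in>LG G'. Neg (fill \<eta>' (dGAnn (- G') g \<psi>')) \<in> ?y" ..
    qed
    then show ?thesis by blast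
  next
    case noG: False
    show ?thesis
    proof (cases "\<exists>\<eta> G \<psi>. \<phi> = fill \<eta> (Coal G \<psi>)")
      case True
      then obtain \<eta> G \<psi> where phi: "\<phi> = fill \<eta> (Coal G \<psi>)" by blast
      have "\<exists>g\<in>LG G. consistent (fext x (Neg (fill \<eta> (dGAnn (- G) g \<psi>))))"
      proof (rule ccontr)
        assume neg: "\<not> ?thesis"
        have "fill \<eta> (dGAnn (- G) g \<psi>) \<in> x" if "g \<in> LG G" for g
        proof -
          have "fimp (Neg (fill \<eta> (dGAnn (- G) g \<psi>))) fbot \<in> x" using neg that by (simp add: ext_cons)
          then show ?thesis by (rule th_taut_mp[OF t _ taut_negbot])
        qed
        then have "\<phi> \<in> x" unfolding phi by (rule th_R6[OF t])
        with incons show False by simp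
      qed
      then obtain g where g: "g \<in> LG G" and cg: "consistent (fext x (Neg (fill \<eta> (dGAnn (- G) g \<psi>))))"
        by blast
      let ?y = "fext x (Neg (fill \<eta> (dGAnn (- G) g \<psi>)))"
      have "Good x \<phi> ?y"
        unfolding Good_def
      proof (intro conjI disjI2 allI impI)
        show "is_theory ?y" by (rule ext_theory[OF t])
        show "consistent ?y" by (rule cg)
        show "x \<subseteq> ?y" by (rule ext_sub[OF t])
        show "Neg \<phi> \<in> ?y" using nx ext_sub[OF t] by blast
      next
        fix \<eta>' G' \<chi>' \<psi>' assume "\<phi> = fill \<eta>' (GAnn G' \<chi>' \<psi>')"
        then have False using phi fill_GC[of \<eta>' G' \<chi>' \<psi>' \<eta> G \<psi>] by simp
        then show "\<exists>g\<in>LG G'. Neg (fill \<eta>' (Conj \<chi>' (Ann (Conj g \<chi>') \<psi>'))) \<in> ?y" ..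
      next
        fix \<eta>' G' \<psi>' assume "\<phi> = fill \<eta>' (Coal G' \<psi>')"
        then have "fill \<eta> (Coal G \<psi>) = fill \<eta>' (Coal G' \<psi>')" using phi by simp
        then have "\<eta>' = \<eta> \<and> G' = G \<and> \<psi>' = \<psi>" by (metis fill_C_inj)
        then show "\<exists>g\<in>LG G'. Neg (fill \<eta>' (dGAnn (- G') g \<psi>')) \<in> ?y"
          using g ext_mem[OF t] by blast
      qed
      then show ?thesis by blast
    next
      case False
      have "Good x \<phi> x" unfolding Good_def
        by (intro conjI disjI2 allI impI t c nx subset_refl) (use noG False in blast)+
      then show ?thesis by blast
    qed
  qed
qed



definition fenum :: "nat \<Rightarrow> ('a::finite,'p::countable) fm" where
  "fenum = (SOME e. surj e)"

lemma surj_enum: "surj fenum"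
  unfolding fenum_def by (rule someI_ex[OF enum_ex])

primrec lchain :: "('a::finite,'p::countable) fm set \<Rightarrow> nat \<Rightarrow> ('a,'p) fm set" where
  "lchain x 0 = x"
| "lchain x (Suc n) = (SOME y. Good (lchain x n) (fenum n) y)"

lemma chain_tc:
  assumes t: "is_theory x" and c: "consistent x"
  shows "is_theory (lchain x n) \<and> consistent (lchain x n)"
proof (induction n)
  case 0 then show ?case using t c by simp
next
  case (Suc n)
  then have "Good (lchain x n) (fenum n) (lchain x (Suc n))"
    using someI_ex[OF good_ex[of "lchain x n" "fenum n"]] by simp
  then show ?case by (simp add: Good_def)
qed

lemma chain_good:
  assumes t: "is_theory x" and c: "consistent x"
  shows "Good (lchain x n) (fenum n) (lchain x (Suc n))"
  using chain_tc[OF t c, of n] someI_ex[OF good_ex[of "lchain x n" "fenum n"]] by simp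

lemma chain_mono:
  assumes t: "is_theory x" and c: "consistent x" and mn: "m \<le> n"
  shows "lchain x m \<subseteq> lchain x n"
proof (rule lift_Suc_mono_le[of "lchain x", OF _ mn])
  fix k show "lchain x k \<subseteq> lchain x (Suc k)" using chain_good[OF t c, of k] by (simp add: Good_def)
qed

lemma lindenbaum:
  fixes x :: "('a::finite,'p::countable) fm set"
  assumes t: "is_theory x" and c: "consistent x"
  shows "\<exists>z\<in>WC. x \<subseteq> z"
proof -
  define z where "z = (\<Union>n. lchain x n)"
  have inz: "\<phi> \<in> lchain x n \<Longrightarrow> \<phi> \<in> z" for \<phi> n unfolding z_def by blast
  have two: "\<exists>n. a \<in> lchain x n \<and> b \<in> lchain x n" if az: "a \<in> z" and bz: "b \<in> z" for a b
  proof -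
    obtain m where m: "a \<in> lchain x m" using az unfolding z_def by blast
    obtain k where k: "b \<in> lchain x k" using bz unfolding z_def by blast
    have "a \<in> lchain x (max m k)" using m chain_mono[OF t c, of m "max m k"] by auto
    moreover have "b \<in> lchain x (max m k)" using k chain_mono[OF t c, of k "max m k"] by auto
    ultimately show ?thesis by blast
  qed
  have cz: "consistent z"
  proof -
    have "fbot \<notin> lchain x n" for n using chain_tc[OF t c, of n] by (simp add: consistent_def)
    then show ?thesis unfolding consistent_def z_def by blast
  qed
  have nocontra: False if az: "a \<in> z" and naz: "Neg a \<in> z" for a
  proof -
    obtain n where "a \<in> lchain x n" "Neg a \<in> lchain x n" using two[OF az naz] by blast
    then show False using th_contra chain_tc[OF t c, of n] by blast
  qed
  have tz: "is_theory z"
    unfolding is_theory_def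
  proof (intro conjI allI impI subsetI)
    fix \<psi> :: "('a,'p) fm" assume "\<psi> \<in> CoRGAL"
    then have "\<psi> \<in> lchain x 0" using th_CoRGAL[OF t] by simp
    then show "\<psi> \<in> z" by (rule inz)
  next
    fix a b :: "('a,'p) fm" assume "a \<in> z" "fimp a b \<in> z"
    then obtain n where "a \<in> lchain x n" "fimp a b \<in> lchain x n" using two by blast
    then have "b \<in> lchain x n" using th_mp chain_tc[OF t c, of n] by blast
    then show "b \<in> z" by (rule inz)
  next
    fix \<eta> G \<chi> \<phi>
    assume h: "\<forall>\<psi>\<in>LG G. fill \<eta> (Conj \<chi> (Ann (Conj \<psi> \<chi>) \<phi>)) \<in> z"
    obtain n where n: "fenum n = fill \<eta> (GAnn G \<chi> \<phi>)" using surj_enum by (metis surjD)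
    have g: "Good (lchain x n) (fenum n) (lchain x (Suc n))" by (rule chain_good[OF t c])
    show "fill \<eta> (GAnn G \<chi> \<phi>) \<in> z"
    proof (cases "fenum n \<in> lchain x (Suc n)")
      case True then show ?thesis using n inz by metis
    next
      case False
      with g n obtain g' where "g' \<in> LG G" "Neg (fill \<eta> (Conj \<chi> (Ann (Conj g' \<chi>) \<phi>))) \<in> lchain x (Suc n)"
        unfolding Good_def by blast
      then show ?thesis using h inz nocontra by blast
    qed
  next
    fix \<eta> G \<phi>
    assume h: "\<forall>\<psi>\<in>LG G. fill \<eta> (dGAnn (- G) \<psi> \<phi>) \<in> z"
    obtain n where n: "fenum n = fill \<eta> (Coal G \<phi>)" using surj_enum by (metis surjD)
    have g: "Good (lchain x n) (fenum n) (lchain x (Suc n))" by (rule chain_good[OF t c])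
    show "fill \<eta> (Coal G \<phi>) \<in> z"
    proof (cases "fenum n \<in> lchain x (Suc n)")
      case True then show ?thesis using n inz by metis
    next
      case False
      with g n obtain g' where "g' \<in> LG G" "Neg (fill \<eta> (dGAnn (- G) g' \<phi>)) \<in> lchain x (Suc n)"
        unfolding Good_def by blast
      then show ?thesis using h inz nocontra by blast
    qed
  qed
  have mz: "maximal z"
    unfolding maximal_def
  proof
    fix \<phi> :: "('a,'p) fm"
    obtain n where n: "fenum n = \<phi>" using surj_enum by (metis surjD)
    have g: "Good (lchain x n) (fenum n) (lchain x (Suc n))" by (rule chain_good[OF t c])
    show "\<phi> \<in> z \<or> Neg \<phi> \<in> z"
      using g n inz unfolding Good_def by blast
  qed
  have "z \<in> WC" using tz cz mz by (simp add: WC_def)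
  moreover have "x \<subseteq> z" using inz[of _ 0] by auto
  ultimately show ?thesis by blast
qed



lemma W_MC[simp]: "W MC = WC" by (simp add: MC_def)
lemma Rel_MC[simp]: "Rel MC a = {(x, y). x \<in> WC \<and> y \<in> WC \<and> {\<phi>. K a \<phi> \<in> x} = {\<phi>. K a \<phi> \<in> y}}"
  by (simp add: MC_def)
lemma Val_MC[simp]: "Val MC p = {x \<in> WC. Atom p \<in> x}" by (simp add: MC_def)

definition Kset :: "'a \<Rightarrow> ('a,'p) fm set \<Rightarrow> ('a,'p) fm set" where
  "Kset a x = {\<psi>. K a \<psi> \<in> x}"

lemma Kset_theory:
  fixes x :: "('a,'p) fm set"
  assumes t: "is_theory x"
  shows "is_theory (Kset a x)"
  unfolding is_theory_def
proof (intro conjI allI impI subsetI)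
  fix \<psi> :: "('a,'p) fm" assume "\<psi> \<in> CoRGAL"
  then have "K a \<psi> \<in> x" by (rule th_CoRGAL[OF t CoRGAL.R1])
  then show "\<psi> \<in> Kset a x" by (simp add: Kset_def)
next
  fix p q :: "('a,'p) fm" assume "p \<in> Kset a x" "fimp p q \<in> Kset a x"
  then have h: "K a p \<in> x" "K a (fimp p q) \<in> x" by (simp_all add: Kset_def)
  have "fimp (K a (fimp p q)) (fimp (K a p) (K a q)) \<in> x" by (rule th_CoRGAL[OF t CoRGAL.A1])
  then have "fimp (K a p) (K a q) \<in> x" by (rule th_mp[OF t h(2)])
  then have "K a q \<in> x" by (rule th_mp[OF t h(1)])
  then show "q \<in> Kset a x" by (simp add: Kset_def)
next
  fix \<eta> G \<chi> \<phi>
  assume "\<forall>\<psi>'\<in>LG G. fill \<eta> (Conj \<chi> (Ann (Conj \<psi>' \<chi>) \<phi>)) \<in> Kset a x"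
  then have "\<And>\<psi>'. \<psi>' \<in> LG G \<Longrightarrow> fill (NK a \<eta>) (Conj \<chi> (Ann (Conj \<psi>' \<chi>) \<phi>)) \<in> x"
    by (simp add: Kset_def)
  then have "fill (NK a \<eta>) (GAnn G \<chi> \<phi>) \<in> x" by (rule th_R5[OF t])
  then show "fill \<eta> (GAnn G \<chi> \<phi>) \<in> Kset a x" by (simp add: Kset_def)
next
  fix \<eta> G \<phi>
  assume "\<forall>\<psi>'\<in>LG G. fill \<eta> (dGAnn (- G) \<psi>' \<phi>) \<in> Kset a x"
  then have "\<And>\<psi>'. \<psi>' \<in> LG G \<Longrightarrow> fill (NK a \<eta>) (dGAnn (- G) \<psi>' \<phi>) \<in> x"
    by (simp add: Kset_def)
  then have "fill (NK a \<eta>) (Coal G \<phi>) \<in> x" by (rule th_R6[OF t])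
  then show "fill \<eta> (Coal G \<phi>) \<in> Kset a x" by (simp add: Kset_def)
qed

lemma Kset_mp: "is_theory x \<Longrightarrow> K a p \<in> x \<Longrightarrow> K a (fimp p q) \<in> x \<Longrightarrow> K a q \<in> x"
  using th_mp[OF Kset_theory[of x a], of p q] by (simp add: Kset_def)

lemma K_witness:
  fixes x :: "('a::finite,'p::countable) fm set"
  assumes x: "x \<in> WC" and nk: "K a \<phi> \<notin> x"
  shows "\<exists>z\<in>WC. {\<psi>. K a \<psi> \<in> x} = {\<psi>. K a \<psi> \<in> z} \<and> \<phi> \<notin> z"
proof -
  have t: "is_theory x" by (rule WC_th[OF x])
  let ?y = "fext (Kset a x) (Neg \<phi>)"
  have ty: "is_theory ?y" by (rule ext_theory[OF Kset_theory[OF t]])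
  have cy: "consistent ?y"
  proof -
    have "K a (fimp (Neg \<phi>) fbot) \<notin> x"
    proof
      assume h: "K a (fimp (Neg \<phi>) fbot) \<in> x"
      have "K a (fimp (fimp (Neg \<phi>) fbot) \<phi>) \<in> x"
        by (rule th_CoRGAL[OF t CoRGAL.R1[OF CoRGAL.A0[OF taut_negbot]]])
      then have "K a \<phi> \<in> x" by (rule Kset_mp[OF t h])
      with nk show False by simp
    qed
    then show ?thesis by (simp add: ext_cons Kset_def)
  qed
  obtain z where z: "z \<in> WC" and yz: "?y \<subseteq> z" using lindenbaum[OF ty cy] by blast
  have nz: "\<phi> \<notin> z"
  proof -
    have "Neg \<phi> \<in> ?y" by (rule ext_mem[OF Kset_theory[OF t]])
    then show ?thesis using yz wc_neg[OF z] by blast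
  qed
  have kz: "Kset a x \<subseteq> z" using ext_sub[OF Kset_theory[OF t]] yz by blast
  have "{\<psi>. K a \<psi> \<in> x} = {\<psi>. K a \<psi> \<in> z}"
  proof (intro set_eqI iffI; simp)
    fix \<psi> assume "K a \<psi> \<in> x"
    then have "K a (K a \<psi>) \<in> x" using th_mp[OF t _ th_CoRGAL[OF t CoRGAL.A3]] by blast
    then show "K a \<psi> \<in> z" using kz by (simp add: Kset_def subset_iff)
  next
    fix \<psi> assume kz': "K a \<psi> \<in> z"
    show "K a \<psi> \<in> x"
    proof (rule ccontr)
      assume "K a \<psi> \<notin> x"
      then have "Neg (K a \<psi>) \<in> x" using wc_neg[OF x] by blast
      then have "K a (Neg (K a \<psi>)) \<in> x" using th_mp[OF t _ th_CoRGAL[OF t CoRGAL.A4]] by blast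
      then have "Neg (K a \<psi>) \<in> z" using kz by (simp add: Kset_def subset_iff)
      with kz' show False using wc_neg[OF z] by blast
    qed
  qed
  then show ?thesis using z nz by blast
qed

lemma truth_K:
  fixes x :: "('a::finite,'p::countable) fm set"
  assumes x: "x \<in> WC" and IH: "\<And>y. y \<in> WC \<Longrightarrow> (\<phi> \<in> y \<longleftrightarrow> sat \<phi> MC y)"
  shows "K a \<phi> \<in> x \<longleftrightarrow> sat (K a \<phi>) MC x"
proof
  assume k: "K a \<phi> \<in> x"
  show "sat (K a \<phi>) MC x"
  unfolding sat.simps(4)
  proof (intro ballI impI)
    fix v assume v0: "v \<in> W MC" and r: "(x, v) \<in> Rel MC a"
    then have v: "v \<in> WC" and e: "{\<phi>. K a \<phi> \<in> x} = {\<phi>. K a \<phi> \<in> v}" by auto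
    then have "K a \<phi> \<in> v" using k by blast
    then have "\<phi> \<in> v" using th_mp[OF WC_th[OF v] _ th_CoRGAL[OF WC_th[OF v] CoRGAL.A2]] by blast
    then show "sat \<phi> MC v" using IH[OF v] by blast
  qed
next
  assume s: "sat (K a \<phi>) MC x"
  show "K a \<phi> \<in> x"
  proof (rule ccontr)
    assume "K a \<phi> \<notin> x"
    then obtain z where z: "z \<in> WC" "{\<psi>. K a \<psi> \<in> x} = {\<psi>. K a \<psi> \<in> z}" "\<phi> \<notin> z"
      using K_witness[OF x] by blast
    then have "sat \<phi> MC z" using s x by auto
    with z IH show False by blast
  qed
qed

lemma ann_mp:
  assumes x: "x \<in> WC" and a: "\<alpha> \<in> x" and h1: "Ann \<alpha> (fimp A B) \<in> x" and h2: "Ann \<alpha> A \<in> x"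
  shows "Ann \<alpha> B \<in> x"
proof -
  have 1: "Ann \<alpha> (Neg (Conj A (Neg B))) \<in> x \<longleftrightarrow> (\<alpha> \<in> x \<longrightarrow> Ann \<alpha> (Conj A (Neg B)) \<notin> x)"
    using wc_iff[OF x CoRGAL.A6] wc_imp[OF x] wc_neg[OF x] by blast
  have 2: "Ann \<alpha> (Conj A (Neg B)) \<in> x \<longleftrightarrow> Ann \<alpha> A \<in> x \<and> Ann \<alpha> (Neg B) \<in> x"
    using wc_iff[OF x CoRGAL.A7] wc_conj[OF x] by blast
  have 3: "Ann \<alpha> (Neg B) \<in> x \<longleftrightarrow> (\<alpha> \<in> x \<longrightarrow> Ann \<alpha> B \<notin> x)"
    using wc_iff[OF x CoRGAL.A6] wc_imp[OF x] wc_neg[OF x] by blast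
  show ?thesis using h1 h2 a 1 2 3 unfolding fimp_def by blast
qed



abbreviation "R \<equiv> measures [dq, cx]"

lemma R_I: "dq a \<le> dq b \<Longrightarrow> cx a < cx b \<Longrightarrow> (a, b) \<in> R" by auto
lemma R_I2: "dq a < dq b \<Longrightarrow> (a, b) \<in> R" by auto

lemma red:
  assumes "x \<in> WC" "fiff \<phi> \<phi>' \<in> CoRGAL" "sat \<phi> MC x \<longleftrightarrow> sat \<phi>' MC x" "\<phi>' \<in> x \<longleftrightarrow> sat \<phi>' MC x"
  shows "\<phi> \<in> x \<longleftrightarrow> sat \<phi> MC x"
  using wc_iff[OF assms(1,2)] assms(3,4) by blast

lemma truth_Ann:
  fixes x :: "('a::finite,'p::countable) fm set"
  assumes x: "x \<in> WC"
    and IH: "\<And>y x. (y, Ann \<alpha> \<beta>) \<in> R \<Longrightarrow> x \<in> WC \<Longrightarrow> (y \<in> x \<longleftrightarrow> sat y MC x)"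
  shows "Ann \<alpha> \<beta> \<in> x \<longleftrightarrow> sat (Ann \<alpha> \<beta>) MC x"
proof -
  have xW: "x \<in> W MC" using x by simp
  have t: "is_theory x" by (rule WC_th[OF x])
  have cb: "0 < cx \<beta>" by (rule cx_pos)
  have cab: "cx \<alpha> \<le> cx \<alpha> * cx \<beta>" using cb by simp
  have IHa: "\<alpha> \<in> x \<longleftrightarrow> sat \<alpha> MC x"
    by (rule IH[OF _ x]) (rule R_I, simp, simp add: algebra_simps, use cab cb in linarith)
  show ?thesis
  proof (cases \<beta>)
    case (Atom p)
    show ?thesis unfolding Atom
      by (rule red[OF x CoRGAL.A5 sem_A5[OF xW]], rule IH[OF _ x]) (simp add: Atom fimp_def)
  next
    case (Neg \<gamma>)
    have c: "0 < cx \<gamma>" by (rule cx_pos)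
    show ?thesis unfolding Neg
      by (rule red[OF x CoRGAL.A6 sem_A6], rule IH[OF _ x]) (simp add: Neg fimp_def algebra_simps)
  next
    case (Conj \<gamma> \<delta>)
    show ?thesis unfolding Conj
      by (rule red[OF x CoRGAL.A7 sem_A7], rule IH[OF _ x]) (rule R_I, simp add: Conj max_def, simp add: Conj algebra_simps)
  next
    case (K a \<gamma>)
    show ?thesis unfolding K
      by (rule red[OF x CoRGAL.A8 sem_A8[OF xW]], rule IH[OF _ x]) (rule R_I, simp add: K fimp_def max_def, simp add: K fimp_def algebra_simps)
  next
    case (Ann \<gamma> \<delta>)
    have c: "0 < cx \<delta>" by (rule cx_pos)
    show ?thesis unfolding Ann
      by (rule red[OF x CoRGAL.A9 sem_A9], rule IH[OF _ x]) (rule R_I, simp add: Ann max_def, use c in \<open>simp add: Ann algebra_simps\<close>)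
  next
    case (GAnn G \<chi> \<psi>)
    define Y where "Y g = Ann \<alpha> (Conj \<chi> (Ann (Conj g \<chi>) \<psi>))" for g
    have lt: "(Y g, Ann \<alpha> \<beta>) \<in> R" if "g \<in> LG G" for g
      using dq_el[OF is_el_LG[OF that]] by (simp add: Y_def GAnn max_def)
    have mem: "Ann \<alpha> (GAnn G \<chi> \<psi>) \<in> x \<longleftrightarrow> (\<forall>g\<in>LG G. Y g \<in> x)"
    proof
      assume h: "Ann \<alpha> (GAnn G \<chi> \<psi>) \<in> x"
      show "\<forall>g\<in>LG G. Y g \<in> x"
      proof
        fix g :: "('a,'p) fm" assume g: "g \<in> LG G"
        show "Y g \<in> x"
        proof (cases "\<alpha> \<in> x")
          case True
          have "Ann \<alpha> (fimp (GAnn G \<chi> \<psi>) (Conj \<chi> (Ann (Conj g \<chi>) \<psi>))) \<in> x"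
            by (rule wc_thm[OF x CoRGAL.R2[OF CoRGAL.A10[OF g]]])
          from ann_mp[OF x True this h] show ?thesis by (simp add: Y_def)
        next
          case False
          then have "\<not> sat \<alpha> MC x" using IHa by blast
          then have "sat (Y g) MC x" by (simp add: Y_def)
          then show ?thesis using IH[OF lt[OF g] x] by blast
        qed
      qed
    next
      assume h: "\<forall>g\<in>LG G. Y g \<in> x"
      have "fill (NAnn \<alpha> Hole) (GAnn G \<chi> \<psi>) \<in> x"
        by (rule th_R5[OF t]) (use h in \<open>simp add: Y_def\<close>)
      then show "Ann \<alpha> (GAnn G \<chi> \<psi>) \<in> x" by simp
    qed
    have "Ann \<alpha> \<beta> \<in> x \<longleftrightarrow> (\<forall>g\<in>LG G. sat (Y g) MC x)"
      using mem IH[OF lt x] unfolding GAnn by blast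
    also have "\<dots> \<longleftrightarrow> sat (Ann \<alpha> \<beta>) MC x" unfolding GAnn sem_AG Y_def ..
    finally show ?thesis .
  next
    case (Coal G \<psi>)
    define Y where "Y g = Ann \<alpha> (dGAnn (- G) g \<psi>)" for g
    have lt: "(Y g, Ann \<alpha> \<beta>) \<in> R" if "g \<in> LG G" for g
      using dq_el[OF is_el_LG[OF that]] by (simp add: Y_def Coal dGAnn_def)
    have mem: "Ann \<alpha> (Coal G \<psi>) \<in> x \<longleftrightarrow> (\<forall>g\<in>LG G. Y g \<in> x)"
    proof
      assume h: "Ann \<alpha> (Coal G \<psi>) \<in> x"
      show "\<forall>g\<in>LG G. Y g \<in> x"
      proof
        fix g :: "('a,'p) fm" assume g: "g \<in> LG G"
        show "Y g \<in> x"
        proof (cases "\<alpha> \<in> x")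
          case True
          have "Ann \<alpha> (fimp (Coal G \<psi>) (dGAnn (- G) g \<psi>)) \<in> x"
            by (rule wc_thm[OF x CoRGAL.R2[OF CoRGAL.A11[OF g]]])
          from ann_mp[OF x True this h] show ?thesis by (simp add: Y_def)
        next
          case False
          then have "\<not> sat \<alpha> MC x" using IHa by blast
          then have "sat (Y g) MC x" by (simp add: Y_def)
          then show ?thesis using IH[OF lt[OF g] x] by blast
        qed
      qed
    next
      assume h: "\<forall>g\<in>LG G. Y g \<in> x"
      have "fill (NAnn \<alpha> Hole) (Coal G \<psi>) \<in> x"
        by (rule th_R6[OF t]) (use h in \<open>simp add: Y_def\<close>)
      then show "Ann \<alpha> (Coal G \<psi>) \<in> x" by simp
    qed
    have "Ann \<alpha> \<beta> \<in> x \<longleftrightarrow> (\<forall>g\<in>LG G. sat (Y g) MC x)"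
      using mem IH[OF lt x] unfolding Coal by blast
    also have "\<dots> \<longleftrightarrow> sat (Ann \<alpha> \<beta>) MC x" unfolding Coal sem_AC Y_def ..
    finally show ?thesis .
  qed
qed



lemma truth: "\<forall>x\<in>WC. ((\<phi>::('a::finite,'p::countable) fm) \<in> x \<longleftrightarrow> sat \<phi> MC x)"
proof (induction \<phi> rule: wf_induct[OF wf_measures[of "[dq, cx]"]])
  fix \<phi> :: "('a,'p) fm"
  assume IH0: "\<forall>y. (y, \<phi>) \<in> R \<longrightarrow> (\<forall>x\<in>WC. y \<in> x \<longleftrightarrow> sat y MC x)"
  have IH: "\<And>y x. (y, \<phi>) \<in> R \<Longrightarrow> x \<in> WC \<Longrightarrow> (y \<in> x \<longleftrightarrow> sat y MC x)" using IH0 by blast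
  show "\<forall>x\<in>WC. \<phi> \<in> x \<longleftrightarrow> sat \<phi> MC x"
  proof (intro ballI)
    fix x :: "('a,'p) fm set" assume x: "x \<in> WC"
    have t: "is_theory x" by (rule WC_th[OF x])
    show "\<phi> \<in> x \<longleftrightarrow> sat \<phi> MC x"
    proof (cases \<phi>)
      case (Atom p) then show ?thesis using x by simp
    next
      case (Neg \<psi>)
      have "\<psi> \<in> x \<longleftrightarrow> sat \<psi> MC x" by (rule IH[OF _ x]) (simp add: Neg)
      then show ?thesis unfolding Neg using wc_neg[OF x] by simp
    next
      case (Conj \<psi> \<chi>)
      have "\<psi> \<in> x \<longleftrightarrow> sat \<psi> MC x" by (rule IH[OF _ x]) (rule R_I, simp_all add: Conj)
      moreover have "\<chi> \<in> x \<longleftrightarrow> sat \<chi> MC x" by (rule IH[OF _ x]) (rule R_I, simp_all add: Conj)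
      ultimately show ?thesis unfolding Conj using wc_conj[OF x] by simp
    next
      case (K a \<psi>)
      have "\<And>y. y \<in> WC \<Longrightarrow> (\<psi> \<in> y \<longleftrightarrow> sat \<psi> MC y)" by (rule IH) (simp_all add: K)
      then show ?thesis unfolding K by (rule truth_K[OF x])
    next
      case (Ann \<alpha> \<beta>)
      have "\<And>y x. (y, Ann \<alpha> \<beta>) \<in> R \<Longrightarrow> x \<in> WC \<Longrightarrow> (y \<in> x \<longleftrightarrow> sat y MC x)"
        using IH unfolding Ann .
      then show ?thesis unfolding Ann by (rule truth_Ann[OF x])
    next
      case (GAnn G \<chi> \<psi>)
      have m: "GAnn G \<chi> \<psi> \<in> x \<longleftrightarrow> \<chi> \<in> x \<and> (\<forall>g\<in>LG G. Ann (Conj g \<chi>) \<psi> \<in> x)"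
      proof
        assume h: "GAnn G \<chi> \<psi> \<in> x"
        have a: "Conj \<chi> (Ann (Conj g \<chi>) \<psi>) \<in> x" if g: "g \<in> LG G" for g
          by (rule th_mp[OF t h wc_thm[OF x CoRGAL.A10[OF g]]])
        obtain g0 :: "('a,'p) fm" where "g0 \<in> LG G" using LG_ne[of G] by blast
        then have "Conj \<chi> (Ann (Conj g0 \<chi>) \<psi>) \<in> x" by (rule a)
        then have "\<chi> \<in> x" using wc_conj[OF x] by simp
        moreover have "\<forall>g\<in>LG G. Ann (Conj g \<chi>) \<psi> \<in> x" using a wc_conj[OF x] by simp
        ultimately show "\<chi> \<in> x \<and> (\<forall>g\<in>LG G. Ann (Conj g \<chi>) \<psi> \<in> x)" ..
      next
        assume h: "\<chi> \<in> x \<and> (\<forall>g\<in>LG G. Ann (Conj g \<chi>) \<psi> \<in> x)"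
        have "fill Hole (GAnn G \<chi> \<psi>) \<in> x"
          by (rule th_R5[OF t]) (use h wc_conj[OF x] in simp)
        then show "GAnn G \<chi> \<psi> \<in> x" by simp
      qed
      have i1: "\<chi> \<in> x \<longleftrightarrow> sat \<chi> MC x" by (rule IH[OF _ x]) (rule R_I2, simp add: GAnn)
      have i2: "Ann (Conj g \<chi>) \<psi> \<in> x \<longleftrightarrow> sat (Ann (Conj g \<chi>) \<psi>) MC x" if g: "g \<in> LG G" for g
      proof (rule IH[OF _ x], rule R_I2)
        have "dq g = 0" by (rule dq_el[OF is_el_LG[OF g]])
        then show "dq (Ann (Conj g \<chi>) \<psi>) < dq \<phi>" by (simp add: GAnn)
      qed
      have i3: "(\<forall>g\<in>LG G. Ann (Conj g \<chi>) \<psi> \<in> x) \<longleftrightarrow> (\<forall>g\<in>LG G. sat (Ann (Conj g \<chi>) \<psi>) MC x)"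
        by (rule ball_cong[OF refl]) (rule i2)
      show ?thesis unfolding GAnn sat_GAnn_unfold m i1 i3 ..
    next
      case (Coal G \<psi>)
      have m: "Coal G \<psi> \<in> x \<longleftrightarrow> (\<forall>g\<in>LG G. dGAnn (- G) g \<psi> \<in> x)"
      proof
        assume h: "Coal G \<psi> \<in> x"
        show "\<forall>g\<in>LG G. dGAnn (- G) g \<psi> \<in> x"
        proof
          fix g :: "('a,'p) fm" assume g: "g \<in> LG G"
          show "dGAnn (- G) g \<psi> \<in> x" by (rule th_mp[OF t h wc_thm[OF x CoRGAL.A11[OF g]]])
        qed
      next
        assume h: "\<forall>g\<in>LG G. dGAnn (- G) g \<psi> \<in> x"
        have "fill Hole (Coal G \<psi>) \<in> x"
          by (rule th_R6[OF t]) (use h in simp)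
        then show "Coal G \<psi> \<in> x" by simp
      qed
      have i2: "dGAnn (- G) g \<psi> \<in> x \<longleftrightarrow> sat (dGAnn (- G) g \<psi>) MC x" if g: "g \<in> LG G" for g
      proof (rule IH[OF _ x], rule R_I2)
        have "dq g = 0" by (rule dq_el[OF is_el_LG[OF g]])
        then show "dq (dGAnn (- G) g \<psi>) < dq \<phi>" by (simp add: Coal dGAnn_def)
      qed
      have i3: "(\<forall>g\<in>LG G. dGAnn (- G) g \<psi> \<in> x) \<longleftrightarrow> (\<forall>g\<in>LG G. sat (dGAnn (- G) g \<psi>) MC x)"
        by (rule ball_cong[OF refl]) (rule i2)
      show ?thesis unfolding Coal sem_Coal m i3 ..
    qed
  qed
qed

theorem mainTheorem14:
  fixes \<phi> :: "('a::finite, 'p::countable) fm"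
    and x :: "('a, 'p) fm set"
  assumes "x \<in> WC"
  shows "\<phi> \<in> x \<longleftrightarrow> sat \<phi> MC x"
  using truth assms by blast

end
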